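(* Let $X=\mathbb{CP}^2\#n\overline{\mathbb{CP}}^2$, $k$ a positive integer, $U_5=\{A\in H_2(X;\mathbb{Z}):\mathrm{ind}(A)\ge2k,\ A\cdot H>0\}$ with the preorder $\ge$ below. Every minimal element $A=aH-\sum_{i=1}^nb_iE_i$ of $U_5$ is reduced and satisfies $3a-\sum_{i=1}^nb_i\ge1$.
   Context: $K_0=-3H+E_1+\cdots+E_n$, $\mathrm{ind}(A):=A^2-K_0\cdot A$. With $H^2(X;\mathbb{R})\cong\mathbb{R}^{n+1}$ via $(x_0,\dots,x_n)\leftrightarrow x_0PD(H)-\sum x_iPD(E_i)$, the reduced cone $\mathcal{P}$ is: $0<x_1<x_0$ ($n=1$); $0<x_2\le x_1$, $x_1+x_2<x_0$ ($n=2$); $0<x_n\le\cdots\le x_1$, $x_1+x_2+x_3\le x_0$, $\sum x_i^2<x_0^2$ ($n\ge3$); and $\mathcal{P}^{c_1>0}=\{[\omega]\in\mathcal{P}:\omega(3H-\sum E_i)>0\}$. For $A,B\in U_5$, $A\ge B$ means $\omega(A)\ge\omega(B)$ for all $[\omega]\in\mathcal{P}^{c_1>0}$; $A$ is minimal if there is no other $B\in U_5$, $B\ne A$, with $A\ge B$. A class $aH-\sum b_iE_i$ is reduced if $a>0$, $b_1\ge b_2\ge\cdots\ge b_n\ge0$ and $a\ge b_1+b_2+b_3$. *)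

theory Defs
  imports Complex_Main
begin

text \<open>A class A = aH - sum_{i=1..n} b_i E_i in H_2(X;Z) is
  represented by the pair (a, b) with b :: nat => int, where b i = 0 for i outside {1..n}.
  A cohomology class [omega] <-> (x_0,...,x_n) is represented by x :: nat => real
  (only x 0, ..., x n are relevant).\<close>

definition is_class :: "nat \<Rightarrow> int \<times> (nat \<Rightarrow> int) \<Rightarrow> bool" where
  "is_class n A \<longleftrightarrow> (\<forall>i. i \<notin> {1..n} \<longrightarrow> snd A i = 0)"

text \<open>ind(A) = A.A - K_0.A with K_0 = -3H + E_1 + ... + E_n,
  H.H = 1, E_i.E_j = -delta_ij, H.E_i = 0.\<close>
definition self_int :: "nat \<Rightarrow> int \<times> (nat \<Rightarrow> int) \<Rightarrow> int" where
  "self_int n A = (fst A)^2 - (\<Sum>i=1..n. (snd A i)^2)"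

definition K0_dot :: "nat \<Rightarrow> int \<times> (nat \<Rightarrow> int) \<Rightarrow> int" where
  "K0_dot n A = -3 * fst A + (\<Sum>i=1..n. snd A i)"

definition ind :: "nat \<Rightarrow> int \<times> (nat \<Rightarrow> int) \<Rightarrow> int" where
  "ind n A = self_int n A - K0_dot n A"

definition dot_H :: "int \<times> (nat \<Rightarrow> int) \<Rightarrow> int" where
  "dot_H A = fst A"

text \<open>omega(A) for [omega] = x_0 PD(H) - sum x_i PD(E_i) and A = aH - sum b_i E_i.\<close>
definition omega_eval :: "nat \<Rightarrow> (nat \<Rightarrow> real) \<Rightarrow> int \<times> (nat \<Rightarrow> int) \<Rightarrow> real" where
  "omega_eval n x A = real_of_int (fst A) * x 0 - (\<Sum>i=1..n. x i * real_of_int (snd A i))"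

definition reduced_cone :: "nat \<Rightarrow> (nat \<Rightarrow> real) set" where
  "reduced_cone n =
    (if n = 1 then {x. 0 < x 1 \<and> x 1 < x 0}
     else if n = 2 then {x. 0 < x 2 \<and> x 2 \<le> x 1 \<and> x 1 + x 2 < x 0}
     else {x. 0 < x n \<and> (\<forall>i\<in>{1..<n}. x (Suc i) \<le> x i) \<and> x 1 + x 2 + x 3 \<le> x 0
              \<and> (\<Sum>i=1..n. (x i)^2) < (x 0)^2})"

text \<open>P^{c_1>0}: omega(3H - sum E_i) > 0.\<close>
definition cone_c1pos :: "nat \<Rightarrow> (nat \<Rightarrow> real) set" where
  "cone_c1pos n = {x \<in> reduced_cone n. 3 * x 0 - (\<Sum>i=1..n. x i) > 0}"

definition U5 :: "nat \<Rightarrow> nat \<Rightarrow> (int \<times> (nat \<Rightarrow> int)) set" where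
  "U5 n k = {A. is_class n A \<and> ind n A \<ge> 2 * int k \<and> dot_H A > 0}"

definition geq_cls :: "nat \<Rightarrow> int \<times> (nat \<Rightarrow> int) \<Rightarrow> int \<times> (nat \<Rightarrow> int) \<Rightarrow> bool" where
  "geq_cls n A B \<longleftrightarrow> (\<forall>x\<in>cone_c1pos n. omega_eval n x A \<ge> omega_eval n x B)"

definition minimal_U5 :: "nat \<Rightarrow> nat \<Rightarrow> int \<times> (nat \<Rightarrow> int) \<Rightarrow> bool" where
  "minimal_U5 n k A \<longleftrightarrow> A \<in> U5 n k \<and> \<not> (\<exists>B\<in>U5 n k. B \<noteq> A \<and> geq_cls n A B)"

text \<open>Reduced: a > 0, b_1 >= ... >= b_n >= 0, a >= b_1 + b_2 + b_3
  (b_i = 0 for i > n by the representation convention).\<close>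
definition reduced_cls :: "nat \<Rightarrow> int \<times> (nat \<Rightarrow> int) \<Rightarrow> bool" where
  "reduced_cls n A \<longleftrightarrow> fst A > 0 \<and> (\<forall>i\<in>{1..<n}. snd A (Suc i) \<le> snd A i)
     \<and> (\<forall>i\<in>{1..n}. snd A i \<ge> 0) \<and> fst A \<ge> snd A 1 + snd A 2 + snd A 3"

end

theory Submission
  imports Defs
begin

lemma sum_one_pt:
  fixes h :: "nat \<Rightarrow> 'a::comm_monoid_add"
  assumes "finite S" "i \<in> S" "\<forall>j\<in>S. j \<noteq> i \<longrightarrow> h j = 0"
  shows "sum h S = h i"
proof -
  have "sum h S = h i + sum h (S - {i})" by (rule sum.remove[OF assms(1,2)])
  moreover have "sum h (S - {i}) = 0" using assms by (intro sum.neutral) auto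
  ultimately show ?thesis by simp
qed

lemma sum_two_pt:
  fixes h :: "nat \<Rightarrow> 'a::comm_monoid_add"
  assumes "finite S" "i \<in> S" "j \<in> S" "i \<noteq> j" "\<forall>l\<in>S. l \<noteq> i \<and> l \<noteq> j \<longrightarrow> h l = 0"
  shows "sum h S = h i + h j"
proof -
  have "sum h S = h i + sum h (S - {i})" by (rule sum.remove[OF assms(1,2)])
  moreover have "sum h (S - {i}) = h j" using assms by (intro sum_one_pt) auto
  ultimately show ?thesis by simp
qed

lemma split3: "3 \<le> n \<Longrightarrow> sum (h::nat \<Rightarrow> 'a::comm_monoid_add) {1..n} = h 1 + h 2 + h 3 + sum h {4..n}"
proof -
  assume "3 \<le> n"
  then have "{1..n} = insert 1 (insert 2 (insert 3 {4..n}))" by auto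
  then show ?thesis by (simp add: add.assoc)
qed

lemma sum_le3:
  fixes h :: "nat \<Rightarrow> 'a::comm_monoid_add"
  assumes "1 \<le> n"
  shows "(\<Sum>j=1..n. if j \<le> 3 then h j else 0) = h 1 + (if 2 \<le> n then h 2 else 0) + (if 3 \<le> n then h 3 else 0)"
proof (cases "3 \<le> n")
  case True
  have "(\<Sum>j=4..n. if j \<le> 3 then h j else 0) = 0" by (intro sum.neutral) auto
  moreover have "(\<Sum>j=1..n. if j \<le> 3 then h j else 0) = (if (1::nat) \<le> 3 then h 1 else 0) + (if (2::nat) \<le> 3 then h 2 else 0)
     + (if (3::nat) \<le> 3 then h 3 else 0) + (\<Sum>j=4..n. if j \<le> 3 then h j else 0)"
    by (rule split3[OF True])
  ultimately show ?thesis using True by simp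
next
  case False
  then have "n = 1 \<or> n = 2" using assms by auto
  then show ?thesis by (auto simp: numeral_2_eq_2)
qed

lemma chain_le:
  fixes x :: "nat \<Rightarrow> real"
  assumes "\<forall>i\<in>{1..<n}. x (Suc i) \<le> x i" "1 \<le> i" "i \<le> n"
  shows "x n \<le> x i"
  using assms(3)
proof (induction i rule: inc_induct)
  case base then show ?case by simp
next
  case (step m)
  then have "x (Suc m) \<le> x m" using assms(1,2) by auto
  then show ?case using step by simp
qed

lemma cone_props:
  assumes "x \<in> cone_c1pos n" "1 \<le> n"
  shows "\<forall>i. 1 \<le> i \<and> i \<le> n \<longrightarrow> x i > 0"
   and "\<forall>i. 1 \<le> i \<and> i < n \<longrightarrow> x (Suc i) \<le> x i"
   and "x 1 + (if 2 \<le> n then x 2 else 0) + (if 3 \<le> n then x 3 else 0) \<le> x 0"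
   and "(\<Sum>i=1..n. x i) < 3 * x 0"
proof -
  have R: "x \<in> reduced_cone n" and S: "3 * x 0 - (\<Sum>i=1..n. x i) > 0"
    using assms by (auto simp: cone_c1pos_def)
  show "(\<Sum>i=1..n. x i) < 3 * x 0" using S by simp
  consider "n = 1" | "n = 2" | "3 \<le> n" using assms(2) by linarith
  then have all: "(\<forall>i. 1 \<le> i \<and> i \<le> n \<longrightarrow> x i > 0) \<and> (\<forall>i. 1 \<le> i \<and> i < n \<longrightarrow> x (Suc i) \<le> x i)
     \<and> x 1 + (if 2 \<le> n then x 2 else 0) + (if 3 \<le> n then x 3 else 0) \<le> x 0"
  proof cases
    case 1
    then have c: "0 < x 1 \<and> x 1 < x 0" using R by (simp add: reduced_cone_def)
    have p: "\<forall>i. 1 \<le> i \<and> i \<le> n \<longrightarrow> x i > 0"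
    proof (intro allI impI)
      fix i assume "1 \<le> i \<and> i \<le> n"
      then have "i = 1" using 1 by simp
      then show "x i > 0" using c by simp
    qed
    have q: "\<forall>i. 1 \<le> i \<and> i < n \<longrightarrow> x (Suc i) \<le> x i" using 1 by simp
    show ?thesis using p q c 1 by simp
  next
    case 2
    then have c: "0 < x 2 \<and> x 2 \<le> x 1 \<and> x 1 + x 2 < x 0" using R by (auto simp: reduced_cone_def)
    have i2: "\<And>i. 1 \<le> i \<Longrightarrow> i \<le> n \<Longrightarrow> i = 1 \<or> i = 2" using 2 by auto
    have p: "\<forall>i. 1 \<le> i \<and> i \<le> n \<longrightarrow> x i > 0"
    proof (intro allI impI)
      fix i assume "1 \<le> i \<and> i \<le> n"
      then have "i = 1 \<or> i = 2" using i2 by blast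
      then show "x i > 0" using c by auto
    qed
    have q: "\<forall>i. 1 \<le> i \<and> i < n \<longrightarrow> x (Suc i) \<le> x i"
    proof (intro allI impI)
      fix i assume "1 \<le> i \<and> i < n"
      then have "i = 1" using 2 by auto
      then show "x (Suc i) \<le> x i" using c by (simp add: numeral_2_eq_2)
    qed
    have r: "x 1 + (if 2 \<le> n then x 2 else 0) + (if 3 \<le> n then x 3 else 0) \<le> x 0"
      using c 2 by simp
    show ?thesis using p q r by blast
  next
    case 3
    then have c: "0 < x n \<and> (\<forall>i\<in>{1..<n}. x (Suc i) \<le> x i) \<and> x 1 + x 2 + x 3 \<le> x 0"
    proof -
      have "n \<noteq> 1" "n \<noteq> 2" using 3 by auto
      then show ?thesis using R unfolding reduced_cone_def by simp
    qed
    have p: "\<forall>i. 1 \<le> i \<and> i \<le> n \<longrightarrow> x i > 0"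
    proof (intro allI impI)
      fix i assume h: "1 \<le> i \<and> i \<le> n"
      then have "x n \<le> x i" using c chain_le[of n x i] by blast
      then show "x i > 0" using c by linarith
    qed
    have q: "\<forall>i. 1 \<le> i \<and> i < n \<longrightarrow> x (Suc i) \<le> x i" using c by simp
    have r: "x 1 + (if 2 \<le> n then x 2 else 0) + (if 3 \<le> n then x 3 else 0) \<le> x 0"
      using c 3 by simp
    show ?thesis using p q r by blast
  qed
  then show "\<forall>i. 1 \<le> i \<and> i \<le> n \<longrightarrow> x i > 0"
   and "\<forall>i. 1 \<le> i \<and> i < n \<longrightarrow> x (Suc i) \<le> x i"
   and "x 1 + (if 2 \<le> n then x 2 else 0) + (if 3 \<le> n then x 3 else 0) \<le> x 0" by blast+
qed

lemma ind_formula: "ind n (a, b) = a^2 + 3*a - (\<Sum>i=1..n. b i ^ 2 + b i)"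
  by (simp add: ind_def self_int_def K0_dot_def sum.distrib)

lemma omega_diff: "omega_eval n x (a, b) - omega_eval n x (a', b') =
   real_of_int (a - a') * x 0 - (\<Sum>i=1..n. x i * real_of_int (b i - b' i))"
proof -
  have "(\<Sum>i=1..n. x i * real_of_int (b i - b' i)) = (\<Sum>i=1..n. x i * real_of_int (b i)) - (\<Sum>i=1..n. x i * real_of_int (b' i))"
    by (simp add: sum_subtractf[symmetric] right_diff_distrib)
  then show ?thesis by (simp add: omega_eval_def algebra_simps)
qed

lemma q_ge: "(t::int)^2 + t \<ge> 2 * t" "(t::int)^2 + t \<ge> 0"
proof -
  have "t * (t - 1) \<ge> 0"
  proof (cases "t \<ge> 1")
    case True then show ?thesis by (intro mult_nonneg_nonneg) auto
  next
    case False then show ?thesis by (intro mult_nonpos_nonpos) auto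
  qed
  then show "(t::int)^2 + t \<ge> 2 * t" by (simp add: power2_eq_square algebra_simps)
  have "t * (t + 1) \<ge> 0"
  proof (cases "t \<ge> 0")
    case True then show ?thesis by (intro mult_nonneg_nonneg) auto
  next
    case False then show ?thesis by (intro mult_nonpos_nonpos) auto
  qed
  then show "(t::int)^2 + t \<ge> 0" by (simp add: power2_eq_square algebra_simps)
qed

theorem lemma4p4:
  fixes n k :: nat and a :: int and b :: "nat \<Rightarrow> int"
  assumes "n \<ge> 1" and "k \<ge> 1"
    and "minimal_U5 n k (a, b)"
  shows "reduced_cls n (a, b) \<and> 3 * a - (\<Sum>i=1..n. b i) \<ge> 1"
proof -
  have AU: "(a, b) \<in> U5 n k" and nob: "\<And>B. B \<in> U5 n k \<Longrightarrow> B \<noteq> (a, b) \<Longrightarrow> \<not> geq_cls n (a, b) B"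
    using assms(3) unfolding minimal_U5_def by auto
  have cls: "\<And>i. i \<notin> {1..n} \<Longrightarrow> b i = 0" and indA: "ind n (a, b) \<ge> 2 * int k" and apos: "a > 0"
    using AU by (auto simp: U5_def is_class_def dot_H_def)
  have ind2: "ind n (a, b) \<ge> 2" using indA assms(2) by linarith
  define Q where "Q = (\<lambda>c::nat \<Rightarrow> int. (\<Sum>i=1..n. c i ^ 2 + c i))"
  have indQ: "\<And>a' c. ind n (a', c) = a'^2 + 3*a' - Q c" by (simp add: ind_formula Q_def)
  note CP = cone_props[OF _ assms(1)]
  have nonneg: "\<forall>i\<in>{1..n}. b i \<ge> 0"
  proof (rule ccontr)
    assume "\<not> ?thesis"
    then obtain i where i: "i \<in> {1..n}" "b i < 0" by auto
    define b' where "b' = b(i := - b i - 1)"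
    have "Q b' = Q b" unfolding Q_def
      by (intro sum.cong) (auto simp: b'_def power2_eq_square algebra_simps)
    then have "ind n (a, b') = ind n (a, b)" by (simp add: indQ)
    moreover have "is_class n (a, b')" using cls i by (auto simp: is_class_def b'_def)
    ultimately have BU: "(a, b') \<in> U5 n k" using AU by (simp add: U5_def dot_H_def)
    have ne: "(a, b') \<noteq> (a, b)"
    proof
      assume "(a, b') = (a, b)"
      then have "b' i = b i" by simp
      then show False using i by (simp add: b'_def)
    qed
    have "geq_cls n (a, b) (a, b')" unfolding geq_cls_def
    proof
      fix x assume x: "x \<in> cone_c1pos n"
      have xi: "x i > 0" using CP(1)[OF x] i by auto
      have "(\<Sum>j=1..n. x j * real_of_int (b j - b' j)) = x i * real_of_int (b i - b' i)"
        by (rule sum_one_pt) (use i in \<open>auto simp: b'_def\<close>)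
      also have "\<dots> = x i * real_of_int (2 * b i + 1)" by (simp add: b'_def)
      also have "\<dots> \<le> 0" using xi i by (intro mult_nonneg_nonpos) auto
      finally show "omega_eval n x (a, b) \<ge> omega_eval n x (a, b')"
        using omega_diff[of n x a b a b'] by simp
    qed
    then show False using nob BU ne by blast
  qed
  have sorted: "\<forall>i\<in>{1..<n}. b (Suc i) \<le> b i"
  proof (rule ccontr)
    assume "\<not> ?thesis"
    then obtain i where i: "i \<in> {1..<n}" "b i < b (Suc i)" by auto
    define b' where "b' = b(i := b (Suc i), Suc i := b i)"
    have "Q b - Q b' = (\<Sum>j=1..n. (b j ^ 2 + b j) - (b' j ^ 2 + b' j))"
      unfolding Q_def by (simp add: sum_subtractf)
    also have "\<dots> = ((b i ^ 2 + b i) - (b' i ^ 2 + b' i)) + ((b (Suc i) ^ 2 + b (Suc i)) - (b' (Suc i) ^ 2 + b' (Suc i)))"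
      by (rule sum_two_pt) (use i in \<open>auto simp: b'_def\<close>)
    also have "\<dots> = 0" by (simp add: b'_def)
    finally have "ind n (a, b') = ind n (a, b)" by (simp add: indQ)
    moreover have "is_class n (a, b')" using cls i by (auto simp: is_class_def b'_def)
    ultimately have BU: "(a, b') \<in> U5 n k" using AU by (simp add: U5_def dot_H_def)
    have ne: "(a, b') \<noteq> (a, b)"
    proof
      assume "(a, b') = (a, b)"
      then have "b' i = b i" by simp
      then show False using i by (simp add: b'_def)
    qed
    have "geq_cls n (a, b) (a, b')" unfolding geq_cls_def
    proof
      fix x assume x: "x \<in> cone_c1pos n"
      have xi: "x (Suc i) \<le> x i" using CP(2)[OF x] i by auto
      have "(\<Sum>j=1..n. x j * real_of_int (b j - b' j)) = x i * real_of_int (b i - b' i) + x (Suc i) * real_of_int (b (Suc i) - b' (Suc i))"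
        by (rule sum_two_pt) (use i in \<open>auto simp: b'_def\<close>)
      also have "\<dots> = (x i - x (Suc i)) * real_of_int (b i - b (Suc i))" by (simp add: b'_def algebra_simps)
      also have "\<dots> \<le> 0" using xi i by (intro mult_nonneg_nonpos) auto
      finally show "omega_eval n x (a, b) \<ge> omega_eval n x (a, b')"
        using omega_diff[of n x a b a b'] by simp
    qed
    then show False using nob BU ne by blast
  qed
  have Qge: "Q b \<ge> (\<Sum>j=1..n. if j \<le> 3 then 2 * b j else 0)" unfolding Q_def
    by (intro sum_mono) (use q_ge in auto)
  have Qge2: "Q b \<ge> (\<Sum>j=1..n. 2 * b j)" unfolding Q_def
    by (intro sum_mono) (use q_ge in auto)
  have s3eq: "(\<Sum>j=1..n. if j \<le> 3 then b j else 0) = b 1 + b 2 + b 3"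
    using sum_le3[OF assms(1), of b] cls[of 2] cls[of 3] by auto
  have abig: "a \<ge> b 1 + b 2 + b 3"
  proof (rule ccontr)
    assume "\<not> ?thesis"
    then have s: "b 1 + b 2 + b 3 \<ge> a + 1" by simp
    have "(\<Sum>j=1..n. if j \<le> 3 then 2 * b j else 0) = 2 * (\<Sum>j=1..n. if j \<le> 3 then b j else 0)"
      unfolding sum_distrib_left by (intro sum.cong) auto
    then have Qs: "Q b \<ge> 2 * (b 1 + b 2 + b 3)" using Qge s3eq by simp
    show False
    proof (cases "a = 1")
      case True
      then show False using ind2 Qs s by (simp add: indQ)
    next
      case False
      then have a2: "a \<ge> 2" using apos by simp
      define b' where "b' = (\<lambda>j. if j \<in> {1..n} \<and> j \<le> 3 then b j - 1 else b j)"
      have "Q b - Q b' = (\<Sum>j=1..n. (b j ^ 2 + b j) - (b' j ^ 2 + b' j))"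
        unfolding Q_def by (simp add: sum_subtractf)
      also have "\<dots> = (\<Sum>j=1..n. if j \<le> 3 then 2 * b j else 0)"
        by (intro sum.cong) (auto simp: b'_def power2_eq_square algebra_simps)
      also have "\<dots> = 2 * (\<Sum>j=1..n. if j \<le> 3 then b j else 0)"
        unfolding sum_distrib_left by (intro sum.cong) auto
      finally have "Q b' = Q b - 2 * (b 1 + b 2 + b 3)" using s3eq by simp
      then have "ind n (a - 1, b') \<ge> ind n (a, b)" using s
        by (simp add: indQ power2_eq_square algebra_simps)
      moreover have "is_class n (a - 1, b')" using cls by (auto simp: is_class_def b'_def)
      ultimately have BU: "(a - 1, b') \<in> U5 n k" using AU a2 by (simp add: U5_def dot_H_def)
      have ne: "(a - 1, b') \<noteq> (a, b)" by simp
      have "geq_cls n (a, b) (a - 1, b')" unfolding geq_cls_def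
      proof
        fix x assume x: "x \<in> cone_c1pos n"
        have "(\<Sum>j=1..n. x j * real_of_int (b j - b' j)) = (\<Sum>j=1..n. if j \<le> 3 then x j else 0)"
          by (intro sum.cong) (auto simp: b'_def)
        also have "\<dots> = x 1 + (if 2 \<le> n then x 2 else 0) + (if 3 \<le> n then x 3 else 0)"
          by (rule sum_le3[OF assms(1)])
        also have "\<dots> \<le> x 0" using CP(3)[OF x] .
        finally show "omega_eval n x (a, b) \<ge> omega_eval n x (a - 1, b')"
          using omega_diff[of n x a b "a - 1" b'] by simp
      qed
      then show False using nob BU ne by blast
    qed
  qed
  have c1: "3 * a - (\<Sum>i=1..n. b i) \<ge> 1"
  proof (rule ccontr)
    assume "\<not> ?thesis"
    then have s: "(\<Sum>i=1..n. b i) \<ge> 3 * a" by simp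
    have Q2: "Q b \<ge> 2 * (\<Sum>i=1..n. b i)" using Qge2 by (simp add: sum_distrib_left)
    have a4: "a \<ge> 4"
    proof (rule ccontr)
      assume "\<not> a \<ge> 4"
      then have "a = 1 \<or> a = 2 \<or> a = 3" using apos by auto
      then show False using ind2 Q2 s by (auto simp: indQ)
    qed
    define b' where "b' = (\<lambda>j. if j \<in> {1..n} then b j - 1 else b j)"
    have "Q b - Q b' = (\<Sum>j=1..n. (b j ^ 2 + b j) - (b' j ^ 2 + b' j))"
      unfolding Q_def by (simp add: sum_subtractf)
    also have "\<dots> = (\<Sum>j=1..n. 2 * b j)"
      by (intro sum.cong) (auto simp: b'_def power2_eq_square algebra_simps)
    finally have "Q b' = Q b - 2 * (\<Sum>j=1..n. b j)" by (simp add: sum_distrib_left)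
    then have "ind n (a - 3, b') \<ge> ind n (a, b)" using s
      by (simp add: indQ power2_eq_square algebra_simps)
    moreover have "is_class n (a - 3, b')" using cls by (auto simp: is_class_def b'_def)
    ultimately have BU: "(a - 3, b') \<in> U5 n k" using AU a4 by (simp add: U5_def dot_H_def)
    have ne: "(a - 3, b') \<noteq> (a, b)" by simp
    have "geq_cls n (a, b) (a - 3, b')" unfolding geq_cls_def
    proof
      fix x assume x: "x \<in> cone_c1pos n"
      have "(\<Sum>j=1..n. x j * real_of_int (b j - b' j)) = (\<Sum>j=1..n. x j)"
        by (intro sum.cong) (auto simp: b'_def)
      also have "\<dots> < 3 * x 0" using CP(4)[OF x] .
      finally show "omega_eval n x (a, b) \<ge> omega_eval n x (a - 3, b')"
        using omega_diff[of n x a b "a - 3" b'] by simp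
    qed
    then show False using nob BU ne by blast
  qed
  show ?thesis using apos sorted nonneg abig c1 by (simp add: reduced_cls_def)
qed

end
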